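(* Let $a,b\ge 2$ be integers and let $G=\mathrm{Sym}(a)\wr\mathrm{Sym}(b)$ with its imprimitive action on $ab$ points. Then \[ \mathbf{m}(G)=\begin{cases} a+b-2 & \text{if } a=3 \text{ and } b \text{ is odd, or } b=3 \text{ and } a \text{ is odd},\\ a+b-1 & \text{otherwise.}\end{cases} \] In particular, if $G$ is a transitive imprimitive permutation group with a block system consisting of $b$ blocks each containing $a$ points, then $\mathbf{m}(G)\le a+b-1$.
   Context: The imprimitive action of $\mathrm{Sym}(a)\wr\mathrm{Sym}(b)$ is on $[a]\times[b]$, with the base group $\mathrm{Sym}(a)^b$ acting coordinatewise within the blocks $[a]\times\{j\}$ and $\mathrm{Sym}(b)$ permuting the blocks. For a transitive permutation group $X$ on a finite set $\Omega$ with $|\Omega|\ge2$, a subset $A\subseteq\Omega$ is self-separable for $X$ if there exists $x\in X$ with $A\cap A^x=\emptyset$; $\mathbf{m}(X)$ is the minimum cardinality of a subset of $\Omega$ that is not self-separable for $X$. *)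

theory Defs
  imports "HOL-Combinatorics.Permutations"
begin

definition self_separable :: "('a \<Rightarrow> 'a) set \<Rightarrow> 'a set \<Rightarrow> bool" where
  "self_separable X A \<longleftrightarrow> (\<exists>x\<in>X. A \<inter> x ` A = {})"

definition min_nonsep :: "('a \<Rightarrow> 'a) set \<Rightarrow> 'a set \<Rightarrow> nat" where
  "min_nonsep X \<Omega> = (LEAST k. \<exists>A \<subseteq> \<Omega>. card A = k \<and> \<not> self_separable X A)"

text \<open>Sym(a) wr Sym(b) in its imprimitive action on [a] x [b] (points {0..<a} x {0..<b}):
  (i,j) is sent to (tau_j(i), sigma(j)).\<close>
definition wreath_imprim :: "nat \<Rightarrow> nat \<Rightarrow> (nat \<times> nat \<Rightarrow> nat \<times> nat) set" where
  "wreath_imprim a b = {f. \<exists>\<sigma> \<tau>. \<sigma> permutes {0..<b} \<and> (\<forall>j. \<tau> j permutes {0..<a}) \<and>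
      f = (\<lambda>(i,j). if i < a \<and> j < b then (\<tau> j i, \<sigma> j) else (i,j))}"

definition perm_group_on :: "('a \<Rightarrow> 'a) set \<Rightarrow> 'a set \<Rightarrow> bool" where
  "perm_group_on G \<Omega> \<longleftrightarrow> G \<noteq> {} \<and> (\<forall>g\<in>G. g permutes \<Omega>) \<and>
     (\<forall>g\<in>G. \<forall>h\<in>G. g \<circ> h \<in> G) \<and> (\<forall>g\<in>G. inv g \<in> G)"

definition transitive_on :: "('a \<Rightarrow> 'a) set \<Rightarrow> 'a set \<Rightarrow> bool" where
  "transitive_on G \<Omega> \<longleftrightarrow> (\<forall>x\<in>\<Omega>. \<forall>y\<in>\<Omega>. \<exists>g\<in>G. g x = y)"

definition block_system :: "('a \<Rightarrow> 'a) set \<Rightarrow> 'a set \<Rightarrow> 'a set set \<Rightarrow> bool" where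
  "block_system G \<Omega> \<B> \<longleftrightarrow> \<Union>\<B> = \<Omega> \<and> {} \<notin> \<B> \<and>
     (\<forall>B1\<in>\<B>. \<forall>B2\<in>\<B>. B1 \<noteq> B2 \<longrightarrow> B1 \<inter> B2 = {}) \<and>
     (\<forall>g\<in>G. \<forall>B\<in>\<B>. g ` B \<in> \<B>)"

end

theory Submission
  imports Defs
begin

lemma perm_avoid:
  assumes "finite U" "X \<subseteq> U" "Y \<subseteq> U" "card X + card Y \<le> card U"
  shows "\<exists>\<tau>. \<tau> permutes U \<and> \<tau> ` X \<inter> Y = {}"
proof -
  have fX: "finite X" and fY: "finite Y" using assms finite_subset by auto
  have "card (U - Y) = card U - card Y" using assms fY card_Diff_subset by blast
  then have "card X \<le> card (U - Y)" using assms by linarith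
  then obtain Z where Z: "Z \<subseteq> U - Y" "card Z = card X" "finite Z"
    by (metis obtain_subset_with_card_n)
  obtain f where f: "bij_betw f X Z" using finite_same_card_bij[OF fX \<open>finite Z\<close>] Z by metis
  have ZU: "Z \<subseteq> U" using Z by auto
  have "card (U - X) = card (U - Z)"
    using card_Diff_subset[OF fX assms(2)] card_Diff_subset[OF \<open>finite Z\<close> ZU] Z by simp
  then obtain g where g: "bij_betw g (U - X) (U - Z)"
    using finite_same_card_bij assms(1) by (metis finite_Diff)
  define \<tau> where "\<tau> = (\<lambda>x. if x \<in> X then f x else if x \<in> U then g x else x)"
  have b1: "bij_betw \<tau> X Z" using f by (rule bij_betw_cong[THEN iffD1, rotated]) (auto simp: \<tau>_def)
  have b2: "bij_betw \<tau> (U - X) (U - Z)" using g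
    by (rule bij_betw_cong[THEN iffD1, rotated]) (auto simp: \<tau>_def)
  have "bij_betw \<tau> (X \<union> (U - X)) (Z \<union> (U - Z))" using bij_betw_combine[OF b1 b2] by auto
  moreover have "X \<union> (U - X) = U" "Z \<union> (U - Z) = U" using assms ZU by auto
  ultimately have "bij_betw \<tau> U U" by simp
  then have "\<tau> permutes U" by (rule bij_imp_permutes) (use assms in \<open>auto simp: \<tau>_def\<close>)
  moreover have "\<tau> ` X \<inter> Y = {}" using b1 Z unfolding bij_betw_def by auto
  ultimately show ?thesis by blast
qed

lemma sort_perm:
  fixes k :: "nat \<Rightarrow> nat"
  shows "\<exists>p. bij_betw p {0..<n} {0..<n} \<and> (\<forall>i j. i \<le> j \<longrightarrow> j < n \<longrightarrow> k (p i) \<le> k (p j))"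
proof -
  define xs where "xs = sort_key k [0..<n]"
  have "bij_betw ((!) xs) {..<length xs} (set xs)"
    by (rule bij_betw_nth) (auto simp: xs_def)
  then have b: "bij_betw ((!) xs) {0..<n} {0..<n}" by (simp add: xs_def atLeast0LessThan)
  have s: "sorted (map k xs)" by (simp add: xs_def)
  have "k (xs!i) \<le> k (xs!j)" if "i \<le> j" "j < n" for i j
    using sorted_nth_mono[OF s that(1)] that by (simp add: xs_def)
  then show ?thesis using b by blast
qed

lemma card_sum_cols:
  fixes a b :: nat
  assumes "A \<subseteq> {0..<a} \<times> {0..<b}"
  shows "card A = (\<Sum>j\<in>{0..<b}. card {i. (i,j) \<in> A})"
proof -
  have eq: "A = (\<Union>j\<in>{0..<b}. (\<lambda>i. (i,j)) ` {i. (i,j) \<in> A})" using assms by auto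
  have fin: "finite {i. (i,j) \<in> A}" for j
    by (rule finite_subset[of _ "{0..<a}"]) (use assms in auto)
  have "card A = (\<Sum>j\<in>{0..<b}. card ((\<lambda>i. (i,j)) ` {i. (i,j) \<in> A}))"
    by (subst eq, rule card_UN_disjoint) (auto simp: fin)
  also have "\<dots> = (\<Sum>j\<in>{0..<b}. card {i. (i,j) \<in> A})"
    by (rule sum.cong) (auto simp: card_image inj_on_def)
  finally show ?thesis .
qed

lemma reduction:
  assumes A: "A \<subseteq> {0..<a} \<times> {0..<b}" and \<sigma>: "\<sigma> permutes {0..<b}"
    and le: "\<forall>j<b. card {i. (i,j) \<in> A} + card {i. (i,\<sigma> j) \<in> A} \<le> a"
  shows "self_separable (wreath_imprim a b) A"
proof -
  have "\<forall>j. \<exists>t. j < b \<longrightarrow> t permutes {0..<a} \<and> t ` {i. (i,j) \<in> A} \<inter> {i. (i,\<sigma> j) \<in> A} = {}"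
  proof
    fix j
    show "\<exists>t. j < b \<longrightarrow> t permutes {0..<a} \<and> t ` {i. (i,j) \<in> A} \<inter> {i. (i,\<sigma> j) \<in> A} = {}"
    proof (cases "j < b")
      case True
      show ?thesis using perm_avoid[of "{0..<a}" "{i. (i,j) \<in> A}" "{i. (i,\<sigma> j) \<in> A}"] le True A
        by auto
    qed auto
  qed
  then obtain t where t: "\<And>j. j < b \<Longrightarrow> t j permutes {0..<a} \<and> t j ` {i. (i,j) \<in> A} \<inter> {i. (i,\<sigma> j) \<in> A} = {}"
    by metis
  define t' where "t' = (\<lambda>j. if j < b then t j else id)"
  define f where "f = (\<lambda>(i,j). if i < a \<and> j < b then (t' j i, \<sigma> j) else (i,j))"
  have "\<forall>j. t' j permutes {0..<a}" using t by (auto simp: t'_def permutes_id)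
  then have "f \<in> wreath_imprim a b" unfolding wreath_imprim_def f_def using \<sigma> by blast
  moreover have "A \<inter> f ` A = {}"
  proof (rule ccontr)
    assume "A \<inter> f ` A \<noteq> {}"
    then obtain i j where ij: "(i,j) \<in> A" "f (i,j) \<in> A" by auto
    have "i < a" "j < b" using ij A by auto
    then have "f (i,j) = (t j i, \<sigma> j)" by (simp add: f_def t'_def)
    then show False using t[OF \<open>j<b\<close>] ij by auto
  qed
  ultimately show ?thesis unfolding self_separable_def by blast
qed

lemma arith_main:
  fixes a b lo x y :: nat
  assumes "a \<ge> 2" "b \<ge> 2" "lo \<le> b - 1 - lo" "lo < b" "x \<le> y" "y \<le> a" "x + y \<ge> a+1"
    "lo = b - 1 - lo \<Longrightarrow> x = y"
  shows "(b-1-lo-lo)*x + (lo+1)*y \<ge> a + b - 2 \<and>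
         (\<not>((a = 3 \<and> odd b) \<or> (b = 3 \<and> odd a)) \<longrightarrow> (b-1-lo-lo)*x + (lo+1)*y \<ge> a + b - 1)"
proof -
  define m where "m = lo + 1"
  define n where "n = b - 1 - lo - lo"
  have bm: "b + 1 = n + 2*m" using assms unfolding m_def n_def by auto
  have x1: "x \<ge> 1" using assms by auto
  have y2: "y \<ge> 2" using assms by auto
  have nx: "n * x \<ge> n + x - 1 \<or> n = 0"
  proof (cases n)
    case (Suc n') then show ?thesis using x1 by (cases x) auto
  qed auto
  have main: "n*x + m*y \<ge> a + b - 2 \<and>
         (\<not>((a = 3 \<and> odd b) \<or> (b = 3 \<and> odd a)) \<longrightarrow> n*x + m*y \<ge> a + b - 1)"
  proof (cases "n = 0")
    case False
    then have nx': "n*x \<ge> n + x - 1" using nx by auto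
    have "n*x + m*y \<ge> a + b - 1"
    proof (cases "m = 1")
      case True
      then have "m*y = y" by simp
      then show ?thesis using nx' bm assms x1 True by linarith
    next
      case False
      then have "m \<ge> 2" unfolding m_def by auto
      then have "m*y \<ge> 2*y + 2*(m-2)"
      proof -
        obtain d where d: "m = d + 2" using \<open>m\<ge>2\<close> by (metis le_add_diff_inverse2)
        have "m*y = 2*y + d*y" unfolding d by (simp add: algebra_simps)
        moreover have "d*y \<ge> d*2" using y2 by simp
        moreover have "m - 2 = d" using d by simp
        ultimately show ?thesis by simp
      qed
      then show ?thesis using nx' bm assms x1 \<open>m\<ge>2\<close> by linarith
    qed
    then show ?thesis by simp
  next
    case True
    then have xy: "x = y" using assms unfolding n_def by auto
    have m2: "m \<ge> 2" using bm True assms by auto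
    have A: "m*y \<ge> a + b - 2"
    proof -
      obtain d where d: "m = d + 2" using m2 by (metis le_add_diff_inverse2)
      have "m*y = 2*y + d*y" unfolding d by (simp add: algebra_simps)
      moreover have "d*y \<ge> d*2" using y2 by simp
      ultimately show ?thesis using bm True assms xy y2 d by linarith
    qed
    have B: "m*y \<ge> a + b - 1" if ns: "\<not>((a = 3 \<and> odd b) \<or> (b = 3 \<and> odd a))"
    proof (cases "m = 2")
      case True
      then have "b = 3" using bm \<open>n=0\<close> by auto
      then have "even a" using ns by auto
      then have "2*y \<ge> a + 2" using assms xy by presburger
      then show ?thesis using True \<open>b=3\<close> by simp
    next
      case False
      then have m3: "m \<ge> 3" using m2 by auto
      have ob: "odd b" using bm \<open>n=0\<close> by presburger
      then have a3: "a \<noteq> 3" using ns by auto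
      show ?thesis
      proof (cases "y = 2")
        case True
        then have "a = 2" using assms xy a3 by auto
        then show ?thesis using True bm \<open>n=0\<close> by simp
      next
        case False
        then have "y \<ge> 3" using y2 by auto
        have "m*(y-2) \<ge> 3*(y-2)" using m3 by simp
        then show ?thesis using bm True assms xy \<open>y\<ge>3\<close> \<open>n=0\<close> by (simp add: diff_mult_distrib2)
      qed
    qed
    show ?thesis using A B True by simp
  qed
  then show ?thesis unfolding m_def n_def by simp
qed

lemma lower_bound:
  fixes a b :: nat
  assumes a2: "a \<ge> 2" and b2: "b \<ge> 2" and A: "A \<subseteq> {0..<a} \<times> {0..<b}"
    and ns: "\<not> self_separable (wreath_imprim a b) A"
  shows "card A \<ge> a + b - 2 \<and> (\<not>((a = 3 \<and> odd b) \<or> (b = 3 \<and> odd a)) \<longrightarrow> card A \<ge> a + b - 1)"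
proof -
  define k where "k = (\<lambda>j. card {i. (i,j) \<in> A})"
  have ka: "k j \<le> a" for j
  proof -
    have "{i. (i,j) \<in> A} \<subseteq> {0..<a}" using A by auto
    then show ?thesis unfolding k_def using card_mono[of "{0..<a}"] by fastforce
  qed
  obtain p where p: "bij_betw p {0..<b} {0..<b}" and pm: "\<And>i j. i \<le> j \<Longrightarrow> j < b \<Longrightarrow> k (p i) \<le> k (p j)"
    using sort_perm[of b k] by blast
  define q where "q = inv_into {0..<b} p"
  have q: "bij_betw q {0..<b} {0..<b}" unfolding q_def by (rule bij_betw_inv_into[OF p])
  have r: "bij_betw (\<lambda>i. b - 1 - i) {0..<b} {0..<b}"
    by (rule bij_betw_byWitness[where f'="\<lambda>i. b - 1 - i"]) auto
  define \<sigma> where "\<sigma> = (\<lambda>j. if j < b then p (b - 1 - q j) else j)"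
  have "bij_betw (p \<circ> ((\<lambda>i. b - 1 - i) \<circ> q)) {0..<b} {0..<b}"
    by (rule bij_betw_trans[OF bij_betw_trans[OF q r] p])
  then have "bij_betw \<sigma> {0..<b} {0..<b}"
    by (rule bij_betw_cong[THEN iffD1, rotated]) (auto simp: \<sigma>_def)
  then have \<sigma>p: "\<sigma> permutes {0..<b}" by (rule bij_imp_permutes) (auto simp: \<sigma>_def)
  have "\<not> (\<forall>j<b. k j + k (\<sigma> j) \<le> a)"
    using reduction[OF A \<sigma>p] ns unfolding k_def by blast
  then obtain j where j: "j < b" "k j + k (\<sigma> j) > a" by auto
  define i where "i = q j"
  have ib: "i < b" using q j unfolding i_def bij_betw_def by auto
  have pi: "p i = j" unfolding i_def q_def using bij_betw_inv_into_right[OF p] j by auto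
  have si: "\<sigma> j = p (b - 1 - i)" using j unfolding \<sigma>_def i_def by simp
  define lo where "lo = min i (b - 1 - i)"
  define hi where "hi = b - 1 - lo"
  have lohi: "lo \<le> hi" "hi < b" "lo < b" using ib unfolding lo_def hi_def by auto
  have xy: "k (p lo) + k (p hi) > a"
  proof (cases "i \<le> b - 1 - i")
    case True
    then have "lo = i" "hi = b - 1 - i" unfolding lo_def hi_def by auto
    then show ?thesis using j pi si by simp
  next
    case False
    then have "lo = b - 1 - i" "hi = i" using ib unfolding lo_def hi_def by auto
    then show ?thesis using j pi si by simp
  qed
  have cA: "card A = (\<Sum>j\<in>{0..<b}. k j)" using card_sum_cols[OF A] unfolding k_def by simp
  also have "\<dots> = (\<Sum>i\<in>{0..<b}. k (p i))" using sum.reindex_bij_betw[OF p, of k] by simp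
  also have "\<dots> = (\<Sum>i\<in>{0..<lo}. k (p i)) + (\<Sum>i\<in>{lo..<hi}. k (p i)) + (\<Sum>i\<in>{hi..<b}. k (p i))"
    using lohi by (simp add: sum.atLeastLessThan_concat)
  finally have "card A \<ge> (\<Sum>i\<in>{lo..<hi}. k (p i)) + (\<Sum>i\<in>{hi..<b}. k (p i))" by linarith
  moreover have e: "hi - lo = b - 1 - lo - lo" "b - hi = lo + 1" using lohi unfolding hi_def by auto
  moreover have "(\<Sum>i\<in>{lo..<hi}. k (p i)) \<ge> (b - 1 - lo - lo) * k (p lo)"
    using sum_bounded_below[of "{lo..<hi}" "k (p lo)" "\<lambda>i. k (p i)"] pm lohi e by auto
  moreover have "(\<Sum>i\<in>{hi..<b}. k (p i)) \<ge> (lo + 1) * k (p hi)"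
    using sum_bounded_below[of "{hi..<b}" "k (p hi)" "\<lambda>i. k (p i)"] pm lohi e by auto
  ultimately have S: "card A \<ge> (b - 1 - lo - lo) * k (p lo) + (lo + 1) * k (p hi)" by linarith
  have c1: "lo \<le> b - 1 - lo" using lohi unfolding hi_def by simp
  have c2: "k (p lo) \<le> k (p hi)" using pm lohi by auto
  have c3: "lo = b - 1 - lo \<Longrightarrow> k (p lo) = k (p hi)" unfolding hi_def by simp
  have c4: "k (p lo) + k (p hi) \<ge> a + 1" using xy by simp
  have "a + b - 2 \<le> (b - 1 - lo - lo) * k (p lo) + (lo + 1) * k (p hi) \<and>
    (\<not> (a = 3 \<and> odd b \<or> b = 3 \<and> odd a) \<longrightarrow>
     a + b - 1 \<le> (b - 1 - lo - lo) * k (p lo) + (lo + 1) * k (p hi))"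
    by (rule arith_main[OF a2 b2 c1 \<open>lo < b\<close> c2 ka c4 c3])
  then show ?thesis using S by linarith
qed


lemma wreath_elem:
  assumes "f \<in> wreath_imprim a b"
  obtains \<sigma> \<tau> where "\<sigma> permutes {0..<b}" "\<And>j. \<tau> j permutes {0..<a}"
    "\<And>i j. i < a \<Longrightarrow> j < b \<Longrightarrow> f (i,j) = (\<tau> j i, \<sigma> j)"
  using assms unfolding wreath_imprim_def by fastforce

lemma pigeon:
  fixes g :: "nat \<Rightarrow> nat"
  assumes "g permutes {0..<n}" "n < 2*m" "m \<le> n"
  shows "\<exists>x<m. g x < m"
proof (rule ccontr)
  assume "\<not> ?thesis"
  then have "g ` {0..<m} \<subseteq> {m..<n}" using assms permutes_in_image[OF assms(1)] by fastforce
  moreover have "inj_on g {0..<m}" using assms(1) permutes_inj by (metis inj_on_subset subset_UNIV)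
  ultimately have "card {0..<m} \<le> card {m..<n}"
    by (metis card_image card_mono finite_atLeastLessThan)
  then show False using assms by simp
qed

lemma rect_nonsep:
  fixes a b c m :: nat
  assumes "a < 2*c" "c \<le> a" "b < 2*m" "m \<le> b"
  shows "\<not> self_separable (wreath_imprim a b) ({0..<c} \<times> {0..<m})"
proof
  let ?X = "{0..<c} \<times> {0..<m}"
  assume "self_separable (wreath_imprim a b) ?X"
  then obtain f where f: "f \<in> wreath_imprim a b" and d: "?X \<inter> f ` ?X = {}"
    unfolding self_separable_def by blast
  from f obtain \<sigma> \<tau> where s: "\<sigma> permutes {0..<b}" and t: "\<forall>j. \<tau> j permutes {0..<a}"
    and fd: "f = (\<lambda>(i,j). if i < a \<and> j < b then (\<tau> j i, \<sigma> j) else (i,j))"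
    unfolding wreath_imprim_def by blast
  obtain j where j: "j < m" "\<sigma> j < m" using pigeon[OF s assms(3,4)] by blast
  have tj: "\<tau> j permutes {0..<a}" using t by blast
  obtain i where i: "i < c" "\<tau> j i < c" using pigeon[OF tj assms(1,2)] by blast
  have "(i,j) \<in> ?X" using i j by simp
  then have "f (i,j) \<in> f ` ?X" by (rule imageI)
  moreover have "f (i,j) \<in> ?X" using fd i j assms by simp
  ultimately have "f (i,j) \<in> ?X \<inter> f ` ?X" by (rule IntI[rotated])
  then show False unfolding d by simp
qed

lemma gen_nonsep:
  fixes a b :: nat
  assumes "a \<ge> 1" "b \<ge> 1"
  shows "\<not> self_separable (wreath_imprim a b) ({0..<a} \<times> {0} \<union> {0} \<times> {1..<b})"
proof
  let ?X = "{0..<a} \<times> {0} \<union> {0::nat} \<times> {1..<b}"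
  assume "self_separable (wreath_imprim a b) ?X"
  then obtain f where f: "f \<in> wreath_imprim a b" and d: "?X \<inter> f ` ?X = {}"
    unfolding self_separable_def by blast
  from f obtain \<sigma> \<tau> where s: "\<sigma> permutes {0..<b}" and t: "\<forall>j. \<tau> j permutes {0..<a}"
    and fd: "f = (\<lambda>(i,j). if i < a \<and> j < b then (\<tau> j i, \<sigma> j) else (i,j))"
    unfolding wreath_imprim_def by blast
  have t0: "\<tau> 0 permutes {0..<a}" using t by blast
  have sb: "\<sigma> 0 < b" using permutes_in_image[OF s] assms by simp
  obtain i where iX: "(i,0) \<in> ?X" and fiX: "f (i,0) \<in> ?X"
  proof (cases "\<sigma> 0 = 0")
    case True
    have "\<tau> 0 0 < a" using permutes_in_image[OF t0] assms by simp
    moreover have "f (0,0) = (\<tau> 0 0, 0)" using fd assms True by simp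
    ultimately show ?thesis using that[of 0] assms by simp
  next
    case False
    define i where "i = inv (\<tau> 0) 0"
    have "i < a" unfolding i_def using permutes_in_image[OF permutes_inv[OF t0]] assms by simp
    moreover have "\<tau> 0 i = 0" unfolding i_def using permutes_inverses(1)[OF t0] by simp
    ultimately have "f (i,0) = (0, \<sigma> 0)" using fd assms by simp
    then show ?thesis using that[of i] False sb \<open>i < a\<close> by simp
  qed
  from iX have "f (i,0) \<in> f ` ?X" by (rule imageI)
  with fiX have "f (i,0) \<in> ?X \<inter> f ` ?X" by (rule IntI)
  then show False unfolding d by simp
qed

lemma second_part:
  fixes G :: "('x \<Rightarrow> 'x) set"
  assumes "finite \<Omega>" "block_system G \<Omega> \<B>" "card \<B> = b" "\<forall>B\<in>\<B>. card B = a" "b \<ge> 1"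
  shows "min_nonsep G \<Omega> \<le> a + b - 1"
proof -
  have fB: "finite \<B>" using assms(3,5) card.infinite by fastforce
  obtain B0 where B0: "B0 \<in> \<B>" using assms(3,5) by fastforce
  have ne: "\<And>B. B \<in> \<B> \<Longrightarrow> B \<noteq> {}" using assms(2) unfolding block_system_def by auto
  define c where "c = (\<lambda>B::'x set. SOME x. x \<in> B)"
  have c: "c B \<in> B" if hB: "B \<in> \<B>" for B
  proof -
    obtain x where "x \<in> B" using ne[OF hB] by blast
    then show ?thesis unfolding c_def by (rule someI)
  qed
  define A where "A = B0 \<union> c ` (\<B> - {B0})"
  have AO: "A \<subseteq> \<Omega>" using assms(2) B0 c unfolding A_def block_system_def by blast
  have "card A \<le> card B0 + card (c ` (\<B> - {B0}))" unfolding A_def by (rule card_Un_le)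
  also have "\<dots> \<le> a + card (\<B> - {B0})" using assms(4) B0 card_image_le[of "\<B> - {B0}" c] fB by simp
  also have "\<dots> = a + b - 1" using assms(3,5) B0 fB by simp
  finally have cA: "card A \<le> a + b - 1" .
  have "\<not> self_separable G A"
    unfolding self_separable_def
  proof
    assume "\<exists>g\<in>G. A \<inter> g ` A = {}"
    then obtain g where g: "g \<in> G" "A \<inter> g ` A = {}" by blast
    have gB: "g ` B0 \<in> \<B>" using assms(2) g B0 unfolding block_system_def by blast
    show False
    proof (cases "g ` B0 = B0")
      case True
      then have "B0 \<subseteq> A \<inter> g ` A" unfolding A_def by auto
      then show False using g ne[OF B0] by auto
    next
      case False
      then have "c (g ` B0) \<in> A" unfolding A_def using gB by blast
      moreover have "c (g ` B0) \<in> g ` A" using c[OF gB] unfolding A_def by blast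
      ultimately show False using g by blast
    qed
  qed
  then have "min_nonsep G \<Omega> \<le> card A"
    unfolding min_nonsep_def using AO by (intro Least_le) blast
  then show ?thesis using cA by linarith
qed

theorem theoremE:
  fixes a b :: nat
  assumes "a \<ge> 2" and "b \<ge> 2"
  shows "min_nonsep (wreath_imprim a b) ({0..<a} \<times> {0..<b}) =
           (if (a = 3 \<and> odd b) \<or> (b = 3 \<and> odd a) then a + b - 2 else a + b - 1)
         \<and> (\<forall>(G :: ('x \<Rightarrow> 'x) set) \<Omega> \<B>.
               finite \<Omega> \<and> perm_group_on G \<Omega> \<and> transitive_on G \<Omega> \<and>
               block_system G \<Omega> \<B> \<and> card \<B> = b \<and> (\<forall>B\<in>\<B>. card B = a)
               \<longrightarrow> min_nonsep G \<Omega> \<le> a + b - 1)"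
proof
  define T where "T = (if (a = 3 \<and> odd b) \<or> (b = 3 \<and> odd a) then a + b - 2 else a + b - 1)"
  let ?P = "\<lambda>k. \<exists>A \<subseteq> {0..<a} \<times> {0..<b}. card A = k \<and> \<not> self_separable (wreath_imprim a b) A"
  have PT: "?P T"
  proof (cases "a = 3 \<and> odd b")
    case True
    have "\<not> self_separable (wreath_imprim a b) ({0..<2} \<times> {0..<(b+1) div 2})"
      by (rule rect_nonsep) (use True assms in presburger)+
    moreover have "card ({0..<2::nat} \<times> {0..<(b+1) div 2}) = T"
      using True unfolding T_def by (simp add: card_cartesian_product; presburger)
    moreover have "{0..<2} \<times> {0..<(b+1) div 2} \<subseteq> {0..<a} \<times> {0..<b}" using True assms by auto
    ultimately show ?thesis by blast
  next
    case F1: False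
    show ?thesis
    proof (cases "b = 3 \<and> odd a")
      case True
      have "\<not> self_separable (wreath_imprim a b) ({0..<(a+1) div 2} \<times> {0..<2})"
        by (rule rect_nonsep) (use True assms in presburger)+
      moreover have "card ({0..<(a+1) div 2} \<times> {0..<2::nat}) = T"
        using True unfolding T_def by (simp add: card_cartesian_product; presburger)
      moreover have "{0..<(a+1) div 2} \<times> {0..<2} \<subseteq> {0..<a} \<times> {0..<b}" using True assms by auto
      ultimately show ?thesis by blast
    next
      case False
      let ?A = "{0..<a} \<times> {0} \<union> {0::nat} \<times> {1..<b}"
      have "\<not> self_separable (wreath_imprim a b) ?A" by (rule gen_nonsep) (use assms in auto)
      moreover have "card ?A = T"
      proof -
        have "card ?A = card ({0..<a} \<times> {0::nat}) + card ({0::nat} \<times> {1..<b})"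
          by (rule card_Un_disjoint) auto
        then show ?thesis using F1 False assms unfolding T_def by (simp add: card_cartesian_product)
      qed
      moreover have "?A \<subseteq> {0..<a} \<times> {0..<b}" using assms by auto
      ultimately show ?thesis by blast
    qed
  qed
  have "Least ?P = T"
  proof (rule Least_equality)
    show "?P T" by (rule PT)
  next
    fix y assume "?P y"
    then obtain A where "A \<subseteq> {0..<a} \<times> {0..<b}" "card A = y" "\<not> self_separable (wreath_imprim a b) A"
      by blast
    then show "T \<le> y" using lower_bound[OF assms, of A] unfolding T_def by auto
  qed
  then show "min_nonsep (wreath_imprim a b) ({0..<a} \<times> {0..<b}) = T"
    unfolding min_nonsep_def by simp
next
  show "\<forall>(G :: ('x \<Rightarrow> 'x) set) \<Omega> \<B>.
               finite \<Omega> \<and> perm_group_on G \<Omega> \<and> transitive_on G \<Omega> \<and>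
               block_system G \<Omega> \<B> \<and> card \<B> = b \<and> (\<forall>B\<in>\<B>. card B = a)
               \<longrightarrow> min_nonsep G \<Omega> \<le> a + b - 1"
  proof (intro allI impI)
    fix G :: "('x \<Rightarrow> 'x) set" and \<Omega> \<B>
    assume h: "finite \<Omega> \<and> perm_group_on G \<Omega> \<and> transitive_on G \<Omega> \<and>
               block_system G \<Omega> \<B> \<and> card \<B> = b \<and> (\<forall>B\<in>\<B>. card B = a)"
    have "b \<ge> 1" using assms by simp
    then show "min_nonsep G \<Omega> \<le> a + b - 1"
      using second_part[where G=G and \<Omega>=\<Omega> and \<B>=\<B> and b=b and a=a] h by blast
  qed
qed

end
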